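(* Let $\alpha=(\alpha_1,\dots,\alpha_t)$ be palindromic (i.e. $\alpha_i=\alpha_{t+1-i}$ for all $i$) with $t$ odd, let $F=\breve F(\alpha)$ with elements $x_1,\dots,x_n$ and shared elements $s_1,\dots,s_{t-1}$. Assume that $\hat\chi_{s_i}+\hat\chi_{s_{t-i}}$ is $1$-mesic under rowmotion for all $i\in[t-1]$. Then (1) $\hat\chi_{x_k}+\hat\chi_{x_{n-k+1}}$ is $1$-mesic for all $k\in[n]$, and (2) $\chi_{x_k}-\chi_{x_{n-k+1}}$ is $0$-mesic for all $k\in[n]$.
   Context: A fence $\breve F(\alpha_1,\dots,\alpha_t)$ ($t\ge2$, positive integers, $\alpha_1,\alpha_t\ge2$) is the poset on $\{x_1,\dots,x_n\}$, $n=\alpha_1+\dots+\alpha_t-1$, with $a_i=\alpha_1+\dots+\alpha_i$, $a_0=0$, whose cover relations are: for $1\le j\le n-1$ with $a_{i-1}\le j<a_i$, $x_j\lessdot x_{j+1}$ if $i$ odd and $x_j\gtrdot x_{j+1}$ if $i$ even. Shared elements: $s_i=x_{a_i}$. $\mathcal J(F)$ is the set of order ideals; rowmotion $\rho$ sends $I$ to the order ideal generated by $\min(F\setminus I)$. $\hat\chi_q(I)=1$ if $q\in I$, else 0; $\chi_q(I)=1$ if $q\in\max(I)$, else 0. A statistic $f:\mathcal J(F)\to\mathbb R$ is $c$-mesic under rowmotion if its average over every $\rho$-orbit equals $c$. *)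

theory Defs
  imports Complex_Main
begin

text \<open>A fence is given by its composition alpha, a list [alpha_1, ..., alpha_t].
  Elements x_1..x_n are represented by the naturals 1..n.\<close>

definition is_fence_comp :: "nat list \<Rightarrow> bool" where
  "is_fence_comp \<alpha> \<longleftrightarrow> length \<alpha> \<ge> 2 \<and> (\<forall>a\<in>set \<alpha>. a > 0)
     \<and> hd \<alpha> \<ge> 2 \<and> last \<alpha> \<ge> 2"

definition psum :: "nat list \<Rightarrow> nat \<Rightarrow> nat" where
  "psum \<alpha> i = sum_list (take i \<alpha>)"

definition fsize :: "nat list \<Rightarrow> nat" where
  "fsize \<alpha> = sum_list \<alpha> - 1"

definition seg :: "nat list \<Rightarrow> nat \<Rightarrow> nat" where
  "seg \<alpha> j = (LEAST i. j < psum \<alpha> i)"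

text \<open>cover relation: fcover x y means x is covered by y\<close>
definition fcover :: "nat list \<Rightarrow> nat \<Rightarrow> nat \<Rightarrow> bool" where
  "fcover \<alpha> x y \<longleftrightarrow> (\<exists>j. 1 \<le> j \<and> j < fsize \<alpha> \<and>
      ((odd (seg \<alpha> j) \<and> x = j \<and> y = j + 1) \<or> (even (seg \<alpha> j) \<and> x = j + 1 \<and> y = j)))"

definition fle :: "nat list \<Rightarrow> nat \<Rightarrow> nat \<Rightarrow> bool" where
  "fle \<alpha> = (fcover \<alpha>)\<^sup>*\<^sup>*"

definition felems :: "nat list \<Rightarrow> nat set" where
  "felems \<alpha> = {1..fsize \<alpha>}"

definition order_ideals :: "nat list \<Rightarrow> nat set set" where
  "order_ideals \<alpha> = {I. I \<subseteq> felems \<alpha> \<and>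
      (\<forall>x\<in>I. \<forall>y\<in>felems \<alpha>. fle \<alpha> y x \<longrightarrow> y \<in> I)}"

definition fmin :: "nat list \<Rightarrow> nat set \<Rightarrow> nat set" where
  "fmin \<alpha> S = {x\<in>S. \<forall>y\<in>S. fle \<alpha> y x \<longrightarrow> y = x}"

definition fmax :: "nat list \<Rightarrow> nat set \<Rightarrow> nat set" where
  "fmax \<alpha> S = {x\<in>S. \<forall>y\<in>S. fle \<alpha> x y \<longrightarrow> y = x}"

definition rowmotion :: "nat list \<Rightarrow> nat set \<Rightarrow> nat set" where
  "rowmotion \<alpha> I = {y\<in>felems \<alpha>. \<exists>m\<in>fmin \<alpha> (felems \<alpha> - I). fle \<alpha> y m}"

definition orbit :: "nat list \<Rightarrow> nat set \<Rightarrow> nat set set" where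
  "orbit \<alpha> I = {(rowmotion \<alpha> ^^ k) I | k. True}"

definition mesic :: "nat list \<Rightarrow> (nat set \<Rightarrow> real) \<Rightarrow> real \<Rightarrow> bool" where
  "mesic \<alpha> f c \<longleftrightarrow> (\<forall>I\<in>order_ideals \<alpha>.
      (\<Sum>J\<in>orbit \<alpha> I. f J) / real (card (orbit \<alpha> I)) = c)"

definition chi_hat :: "nat \<Rightarrow> nat set \<Rightarrow> real" where
  "chi_hat q I = (if q \<in> I then 1 else 0)"

definition chi :: "nat list \<Rightarrow> nat \<Rightarrow> nat set \<Rightarrow> real" where
  "chi \<alpha> q I = (if q \<in> fmax \<alpha> I then 1 else 0)"

definition shared :: "nat list \<Rightarrow> nat \<Rightarrow> nat" where
  "shared \<alpha> i = psum \<alpha> i"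

end

theory Submission imports Defs begin

locale fctx =
  fixes \<alpha> :: "nat list"
  assumes comp: "is_fence_comp \<alpha>"
begin

abbreviation "tt \<equiv> length \<alpha>"
abbreviation "nn \<equiv> fsize \<alpha>"
abbreviation "U j \<equiv> odd (seg \<alpha> j)"

lemma pos: "i < tt \<Longrightarrow> \<alpha> ! i > 0"
  using comp unfolding is_fence_comp_def by (auto simp: in_set_conv_nth)

lemma tt2: "tt \<ge> 2" using comp unfolding is_fence_comp_def by auto

lemma ne: "\<alpha> \<noteq> []" using tt2 by auto

lemma hd2: "\<alpha> ! 0 \<ge> 2"
  using comp ne unfolding is_fence_comp_def by (simp add: hd_conv_nth)

lemma last2: "\<alpha> ! (tt - 1) \<ge> 2"
  using comp ne unfolding is_fence_comp_def by (simp add: last_conv_nth)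

lemma psum_Suc: "i < tt \<Longrightarrow> psum \<alpha> (Suc i) = psum \<alpha> i + \<alpha> ! i"
  unfolding psum_def by (simp add: take_Suc_conv_app_nth)

lemma psum_0[simp]: "psum \<alpha> 0 = 0" unfolding psum_def by simp

lemma psum_mono: "i \<le> j \<Longrightarrow> psum \<alpha> i \<le> psum \<alpha> j"
proof -
  assume "i \<le> j"
  have "sum_list (take j \<alpha>) = sum_list (take i (take j \<alpha>)) + sum_list (drop i (take j \<alpha>))"
    by (metis append_take_drop_id sum_list_append)
  moreover have "take i (take j \<alpha>) = take i \<alpha>" using \<open>i \<le> j\<close> by (simp add: min_def)
  ultimately show ?thesis unfolding psum_def by simp
qed

lemma psum_strict: "i < j \<Longrightarrow> j \<le> tt \<Longrightarrow> psum \<alpha> i < psum \<alpha> j"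
proof -
  assume a: "i < j" "j \<le> tt"
  have "psum \<alpha> i < psum \<alpha> (Suc i)" using psum_Suc[of i] pos[of i] a by simp
  also have "\<dots> \<le> psum \<alpha> j" using a by (intro psum_mono) simp
  finally show ?thesis .
qed

lemma psum_tt: "psum \<alpha> tt = nn + 1"
proof -
  have "psum \<alpha> tt = sum_list \<alpha>" unfolding psum_def by simp
  moreover have "psum \<alpha> tt \<ge> 2" using psum_mono[of 1 tt] tt2 psum_Suc[of 0] hd2 ne by simp
  ultimately show ?thesis unfolding fsize_def by simp
qed

lemma psum_last: "psum \<alpha> (tt - 1) + 2 \<le> nn + 1"
proof -
  have "Suc (tt - 1) = tt" using tt2 by simp
  then show ?thesis using psum_Suc[of "tt - 1"] last2 tt2 psum_tt by simp
qed

lemma nn_ge: "nn \<ge> 1"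
  using psum_Suc[of 0] hd2 psum_mono[of 1 tt] tt2 psum_tt ne by simp

lemma seg_eq:
  assumes "1 \<le> i" "i \<le> tt" "psum \<alpha> (i - 1) \<le> j" "j < psum \<alpha> i"
  shows "seg \<alpha> j = i"
  unfolding seg_def
proof (rule Least_equality)
  show "j < psum \<alpha> i" by fact
  fix y assume "j < psum \<alpha> y"
  show "i \<le> y"
  proof (rule ccontr)
    assume "\<not> i \<le> y"
    then have "psum \<alpha> y \<le> psum \<alpha> (i - 1)" by (intro psum_mono) simp
    with assms \<open>j < psum \<alpha> y\<close> show False by simp
  qed
qed

lemma seg_props:
  assumes "j < psum \<alpha> tt"
  shows "1 \<le> seg \<alpha> j \<and> seg \<alpha> j \<le> tt \<and> psum \<alpha> (seg \<alpha> j - 1) \<le> j \<and> j < psum \<alpha> (seg \<alpha> j)"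
proof -
  have l: "j < psum \<alpha> (seg \<alpha> j)" unfolding seg_def by (rule LeastI[of _ tt]) fact
  have le: "seg \<alpha> j \<le> tt" unfolding seg_def by (rule Least_le) fact
  have g1: "seg \<alpha> j \<ge> 1" using l by (cases "seg \<alpha> j") auto
  have "\<not> j < psum \<alpha> (seg \<alpha> j - 1)"
    unfolding seg_def by (rule not_less_Least) (use g1 in \<open>simp add: seg_def\<close>)
  with l le g1 show ?thesis by simp
qed

lemma seg_0: "seg \<alpha> 0 = 1"
  using seg_eq[of 1 0] psum_Suc[of 0] pos[of 0] tt2 ne by simp

lemma seg_nn: "seg \<alpha> nn = tt"
  using seg_eq[of tt nn] psum_last psum_tt tt2 by simp


lemma fcover_iff: "fcover \<alpha> x y \<longleftrightarrow>
   (1 \<le> x \<and> x < nn \<and> U x \<and> y = x + 1) \<or> (1 \<le> y \<and> y < nn \<and> \<not> U y \<and> x = y + 1)"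
  unfolding fcover_def by auto

lemma cover_in: "fcover \<alpha> x y \<Longrightarrow> x \<in> felems \<alpha> \<and> y \<in> felems \<alpha> \<and> x \<noteq> y"
  unfolding fcover_iff felems_def by auto

definition R :: "nat \<Rightarrow> nat \<Rightarrow> bool" where
  "R x y \<longleftrightarrow> x = y \<or> (x < y \<and> (\<forall>j. x \<le> j \<and> j < y \<longrightarrow> U j))
     \<or> (y < x \<and> (\<forall>j. y \<le> j \<and> j < x \<longrightarrow> \<not> U j))"

lemma R_trans: "R x y \<Longrightarrow> R y z \<Longrightarrow> R x z"
  unfolding R_def
proof (elim disjE conjE)
qed (auto, (metis diff_Suc_less gr_implies_not0 le_less_linear less_imp_le_nat not_less_eq_eq Suc_pred)+)

lemma fle_R: "fle \<alpha> x y \<Longrightarrow> R x y"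
  unfolding fle_def
proof (induction rule: rtranclp_induct)
  case base then show ?case by (simp add: R_def)
next
  case (step y z)
  have "R y z" using step(2) unfolding fcover_iff R_def by (auto, (metis le_antisym less_Suc_eq_le)+)
  then show ?case using step(3) R_trans by blast
qed

lemma fle_antisym: "fle \<alpha> x y \<Longrightarrow> fle \<alpha> y x \<Longrightarrow> x = y"
  using fle_R[of x y] fle_R[of y x] unfolding R_def by auto


lemma ideal_sub: "J \<in> order_ideals \<alpha> \<Longrightarrow> J \<subseteq> felems \<alpha>"
  unfolding order_ideals_def by auto

lemma ideal_down: "J \<in> order_ideals \<alpha> \<Longrightarrow> y \<in> J \<Longrightarrow> x \<in> felems \<alpha> \<Longrightarrow> fle \<alpha> x y \<Longrightarrow> x \<in> J"
  unfolding order_ideals_def by auto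

lemma ideal_cover: "J \<in> order_ideals \<alpha> \<Longrightarrow> fcover \<alpha> x y \<Longrightarrow> y \<in> J \<Longrightarrow> x \<in> J"
  using ideal_down[of J y x] cover_in[of x y] unfolding fle_def by auto

lemma fle_cover: "fcover \<alpha> x y \<Longrightarrow> fle \<alpha> x y"
  unfolding fle_def by auto

lemma fle_trans: "fle \<alpha> x y \<Longrightarrow> fle \<alpha> y z \<Longrightarrow> fle \<alpha> x z"
  unfolding fle_def by auto

lemma fle_refl: "fle \<alpha> x x"
  unfolding fle_def by auto

lemma Mn_char:
  assumes J: "J \<in> order_ideals \<alpha>"
  shows "x \<in> fmin \<alpha> (felems \<alpha> - J) \<longleftrightarrow> x \<in> felems \<alpha> \<and> x \<notin> J \<and> (\<forall>l. fcover \<alpha> l x \<longrightarrow> l \<in> J)"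
proof
  assume x: "x \<in> fmin \<alpha> (felems \<alpha> - J)"
  show "x \<in> felems \<alpha> \<and> x \<notin> J \<and> (\<forall>l. fcover \<alpha> l x \<longrightarrow> l \<in> J)"
  proof (intro conjI allI impI)
    fix l assume "fcover \<alpha> l x"
    then show "l \<in> J" using x cover_in[of l x] fle_cover[of l x] unfolding fmin_def by blast
  qed (use x in \<open>auto simp: fmin_def\<close>)
next
  assume x: "x \<in> felems \<alpha> \<and> x \<notin> J \<and> (\<forall>l. fcover \<alpha> l x \<longrightarrow> l \<in> J)"
  have "y = x" if y: "y \<in> felems \<alpha> - J" "fle \<alpha> y x" for y
  proof (rule ccontr)
    assume "y \<noteq> x"
    with y(2) obtain z where "fle \<alpha> y z" "fcover \<alpha> z x" unfolding fle_def
      by (metis rtranclp.cases)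
    then have "z \<in> J" using x by blast
    then have "y \<in> J" using ideal_down[OF J] \<open>fle \<alpha> y z\<close> y by blast
    with y show False by blast
  qed
  then show "x \<in> fmin \<alpha> (felems \<alpha> - J)" using x unfolding fmin_def by blast
qed

lemma max_char:
  assumes J: "J \<in> order_ideals \<alpha>"
  shows "x \<in> fmax \<alpha> J \<longleftrightarrow> x \<in> J \<and> (\<forall>u. fcover \<alpha> x u \<longrightarrow> u \<notin> J)"
proof
  assume x: "x \<in> fmax \<alpha> J"
  show "x \<in> J \<and> (\<forall>u. fcover \<alpha> x u \<longrightarrow> u \<notin> J)"
    using x cover_in fle_cover unfolding fmax_def by blast
next
  assume x: "x \<in> J \<and> (\<forall>u. fcover \<alpha> x u \<longrightarrow> u \<notin> J)"
  have "y = x" if y: "y \<in> J" "fle \<alpha> x y" for y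
  proof (rule ccontr)
    assume "y \<noteq> x"
    with y(2) obtain u where "fcover \<alpha> x u" "fle \<alpha> u y" unfolding fle_def
      by (metis converse_rtranclpE)
    then have "u \<in> J" using ideal_down[OF J y(1)] cover_in by blast
    with x \<open>fcover \<alpha> x u\<close> show False by blast
  qed
  then show "x \<in> fmax \<alpha> J" using x unfolding fmax_def by blast
qed

lemma rho_ideal: "rowmotion \<alpha> J \<in> order_ideals \<alpha>"
proof -
  have "y \<in> rowmotion \<alpha> J" if a: "x \<in> rowmotion \<alpha> J" "y \<in> felems \<alpha>" "fle \<alpha> y x" for x y
  proof -
    obtain m where "m \<in> fmin \<alpha> (felems \<alpha> - J)" "fle \<alpha> x m" using a(1) unfolding rowmotion_def by blast
    then show ?thesis using a fle_trans[of y x m] unfolding rowmotion_def by blast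
  qed
  then show ?thesis unfolding order_ideals_def by (auto simp: rowmotion_def)
qed

lemma rho_max_char:
  assumes J: "J \<in> order_ideals \<alpha>"
  shows "x \<in> fmax \<alpha> (rowmotion \<alpha> J) \<longleftrightarrow> x \<in> fmin \<alpha> (felems \<alpha> - J)"
proof
  assume x: "x \<in> fmax \<alpha> (rowmotion \<alpha> J)"
  then obtain m where m: "m \<in> fmin \<alpha> (felems \<alpha> - J)" "fle \<alpha> x m"
    unfolding fmax_def rowmotion_def by blast
  have "m \<in> rowmotion \<alpha> J" using m fle_refl unfolding rowmotion_def fmin_def by blast
  then have "m = x" using x m unfolding fmax_def by blast
  then show "x \<in> fmin \<alpha> (felems \<alpha> - J)" using m by simp
next
  assume x: "x \<in> fmin \<alpha> (felems \<alpha> - J)"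
  have xr: "x \<in> rowmotion \<alpha> J" using x fle_refl unfolding rowmotion_def fmin_def by blast
  have "y = x" if y: "y \<in> rowmotion \<alpha> J" "fle \<alpha> x y" for y
  proof -
    obtain m where m: "m \<in> fmin \<alpha> (felems \<alpha> - J)" "fle \<alpha> y m"
      using y unfolding rowmotion_def by blast
    have "fle \<alpha> x m" using fle_trans y(2) m(2) by blast
    then have "x = m" using m(1) x unfolding fmin_def by blast
    then show "y = x" using fle_antisym y(2) m(2) by blast
  qed
  then show "x \<in> fmax \<alpha> (rowmotion \<alpha> J)" using xr unfolding fmax_def by blast
qed

lemma exists_min_below:
  assumes J: "J \<in> order_ideals \<alpha>"
  shows "y \<in> felems \<alpha> - J \<Longrightarrow> \<exists>m\<in>fmin \<alpha> (felems \<alpha> - J). fle \<alpha> m y"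
proof (induction "card {z\<in>felems \<alpha>. fle \<alpha> z y}" arbitrary: y rule: less_induct)
  case less
  show ?case
  proof (cases "y \<in> fmin \<alpha> (felems \<alpha> - J)")
    case True then show ?thesis using fle_refl by blast
  next
    case False
    then obtain l where l: "fcover \<alpha> l y" "l \<notin> J" using Mn_char[OF J] less.prems by blast
    have lF: "l \<in> felems \<alpha>" using cover_in l by blast
    have sub: "{z\<in>felems \<alpha>. fle \<alpha> z l} \<subset> {z\<in>felems \<alpha>. fle \<alpha> z y}"
    proof
      show "{z\<in>felems \<alpha>. fle \<alpha> z l} \<subseteq> {z\<in>felems \<alpha>. fle \<alpha> z y}"
        using fle_trans fle_cover l by blast
      have "\<not> fle \<alpha> y l" using fle_antisym fle_cover[OF l(1)] cover_in[OF l(1)] by blast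
      then show "{z\<in>felems \<alpha>. fle \<alpha> z l} \<noteq> {z\<in>felems \<alpha>. fle \<alpha> z y}"
        using less.prems fle_refl by blast
    qed
    have "finite {z\<in>felems \<alpha>. fle \<alpha> z y}" unfolding felems_def by simp
    then have "card {z\<in>felems \<alpha>. fle \<alpha> z l} < card {z\<in>felems \<alpha>. fle \<alpha> z y}"
      using sub psubset_card_mono by blast
    then obtain m where "m\<in>fmin \<alpha> (felems \<alpha> - J)" "fle \<alpha> m l"
      using less.hyps[of l] lF l(2) by blast
    then show ?thesis using fle_trans fle_cover[OF l(1)] by blast
  qed
qed

lemma ideal_recover:
  assumes J: "J \<in> order_ideals \<alpha>"
  shows "J = felems \<alpha> - {y\<in>felems \<alpha>. \<exists>m\<in>fmin \<alpha> (felems \<alpha> - J). fle \<alpha> m y}"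
proof -
  have "y \<notin> J" if "m\<in>fmin \<alpha> (felems \<alpha> - J)" "fle \<alpha> m y" for m y
    using that ideal_down[OF J, of y m] unfolding fmin_def by blast
  note h = this
  show ?thesis
  proof (rule set_eqI)
    fix y
    show "y \<in> J \<longleftrightarrow> y \<in> felems \<alpha> - {y\<in>felems \<alpha>. \<exists>m\<in>fmin \<alpha> (felems \<alpha> - J). fle \<alpha> m y}"
    proof
      assume "y \<in> J"
      then show "y \<in> felems \<alpha> - {y\<in>felems \<alpha>. \<exists>m\<in>fmin \<alpha> (felems \<alpha> - J). fle \<alpha> m y}"
        using h ideal_sub[OF J] by blast
    next
      assume a: "y \<in> felems \<alpha> - {y\<in>felems \<alpha>. \<exists>m\<in>fmin \<alpha> (felems \<alpha> - J). fle \<alpha> m y}"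
      show "y \<in> J"
      proof (rule ccontr)
        assume "y \<notin> J"
        then obtain m where "m\<in>fmin \<alpha> (felems \<alpha> - J)" "fle \<alpha> m y"
          using exists_min_below[OF J, of y] a by blast
        then show False using a by blast
      qed
    qed
  qed
qed

lemma fmin_rho: "J \<in> order_ideals \<alpha> \<Longrightarrow> fmin \<alpha> (felems \<alpha> - J) = fmax \<alpha> (rowmotion \<alpha> J)"
  by (rule set_eqI) (simp add: rho_max_char)

lemma rho_inj:
  assumes "J1 \<in> order_ideals \<alpha>" "J2 \<in> order_ideals \<alpha>" "rowmotion \<alpha> J1 = rowmotion \<alpha> J2"
  shows "J1 = J2"
proof -
  have eq: "fmin \<alpha> (felems \<alpha> - J1) = fmin \<alpha> (felems \<alpha> - J2)"
    using fmin_rho[OF assms(1)] fmin_rho[OF assms(2)] assms(3) by simp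
  have h1: "J1 = felems \<alpha> - {y\<in>felems \<alpha>. \<exists>m\<in>fmin \<alpha> (felems \<alpha> - J2). fle \<alpha> m y}"
    using ideal_recover[OF assms(1)] by (simp only: eq)
  show ?thesis using h1 ideal_recover[OF assms(2)] by (rule trans[OF _ sym])
qed

end


context fctx begin

lemma iter_ideal: "I \<in> order_ideals \<alpha> \<Longrightarrow> (rowmotion \<alpha> ^^ k) I \<in> order_ideals \<alpha>"
  by (induction k) (auto simp: rho_ideal)

lemma orbit_sub: "I \<in> order_ideals \<alpha> \<Longrightarrow> orbit \<alpha> I \<subseteq> order_ideals \<alpha>"
  unfolding orbit_def using iter_ideal by blast

lemma ideals_fin: "finite (order_ideals \<alpha>)"
proof -
  have "order_ideals \<alpha> \<subseteq> Pow (felems \<alpha>)" unfolding order_ideals_def by blast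
  moreover have "finite (Pow (felems \<alpha>))" unfolding felems_def by simp
  ultimately show ?thesis by (rule finite_subset)
qed

lemma orbit_fin: "I \<in> order_ideals \<alpha> \<Longrightarrow> finite (orbit \<alpha> I)"
  using orbit_sub ideals_fin finite_subset by blast

lemma I_in: "I \<in> orbit \<alpha> I"
  unfolding orbit_def by (auto intro: exI[of _ 0])

lemma orbit_img_sub: "rowmotion \<alpha> ` orbit \<alpha> I \<subseteq> orbit \<alpha> I"
proof
  fix x assume "x \<in> rowmotion \<alpha> ` orbit \<alpha> I"
  then obtain k where "x = rowmotion \<alpha> ((rowmotion \<alpha> ^^ k) I)" unfolding orbit_def by blast
  then have "x = (rowmotion \<alpha> ^^ Suc k) I" by simp
  then show "x \<in> orbit \<alpha> I" unfolding orbit_def by blast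
qed

lemma orbit_inj: "I \<in> order_ideals \<alpha> \<Longrightarrow> inj_on (rowmotion \<alpha>) (orbit \<alpha> I)"
  unfolding inj_on_def using orbit_sub rho_inj by blast

lemma orbit_img: "I \<in> order_ideals \<alpha> \<Longrightarrow> rowmotion \<alpha> ` orbit \<alpha> I = orbit \<alpha> I"
  using endo_inj_surj[OF orbit_fin orbit_img_sub orbit_inj] by blast

lemma sum_rho: "I \<in> order_ideals \<alpha> \<Longrightarrow>
   (\<Sum>J\<in>orbit \<alpha> I. g (rowmotion \<alpha> J)) = (\<Sum>J\<in>orbit \<alpha> I. g J)"
proof -
  assume I: "I \<in> order_ideals \<alpha>"
  have "(\<Sum>J\<in>orbit \<alpha> I. g J) = (\<Sum>J\<in>rowmotion \<alpha> ` orbit \<alpha> I. g J)" using orbit_img[OF I] by simp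
  also have "\<dots> = (\<Sum>J\<in>orbit \<alpha> I. g (rowmotion \<alpha> J))"
    using sum.reindex[OF orbit_inj[OF I]] by simp
  finally show ?thesis by simp
qed

lemma card_pos: "I \<in> order_ideals \<alpha> \<Longrightarrow> card (orbit \<alpha> I) > 0"
  using orbit_fin I_in card_gt_0_iff by blast

lemma mesic_iff: "mesic \<alpha> f c \<longleftrightarrow>
   (\<forall>I\<in>order_ideals \<alpha>. (\<Sum>J\<in>orbit \<alpha> I. f J) = c * real (card (orbit \<alpha> I)))"
  unfolding mesic_def using card_pos by (auto simp: divide_eq_eq)

lemma cover_up: "1 \<le> k \<Longrightarrow> fcover \<alpha> k u \<longleftrightarrow>
   (k < nn \<and> U k \<and> u = k + 1) \<or> (2 \<le> k \<and> k - 1 < nn \<and> \<not> U (k - 1) \<and> u = k - 1)"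
  unfolding fcover_iff by auto

lemma cover_down: "1 \<le> k \<Longrightarrow> fcover \<alpha> l k \<longleftrightarrow>
   (2 \<le> k \<and> k - 1 < nn \<and> U (k - 1) \<and> l = k - 1) \<or> (k < nn \<and> \<not> U k \<and> l = k + 1)"
  unfolding fcover_iff by auto

lemma chi_val:
  assumes J: "J \<in> order_ideals \<alpha>" and k: "1 \<le> k" "k \<le> nn"
  shows "chi \<alpha> k J = (if k \<in> J \<and> (k < nn \<and> U k \<longrightarrow> k + 1 \<notin> J) \<and> (2 \<le> k \<and> \<not> U (k - 1) \<longrightarrow> k - 1 \<notin> J) then 1 else 0)"
proof -
  have "(\<forall>u. fcover \<alpha> k u \<longrightarrow> u \<notin> J) \<longleftrightarrow> (k < nn \<and> U k \<longrightarrow> k + 1 \<notin> J) \<and> (2 \<le> k \<and> \<not> U (k - 1) \<longrightarrow> k - 1 \<notin> J)"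
    using k by (auto simp add: cover_up)
  then show ?thesis unfolding chi_def using max_char[OF J] by simp
qed

lemma mn_val:
  assumes J: "J \<in> order_ideals \<alpha>" and k: "1 \<le> k" "k \<le> nn"
  shows "chi \<alpha> k (rowmotion \<alpha> J) = (if k \<notin> J \<and> (k < nn \<and> \<not> U k \<longrightarrow> k + 1 \<in> J) \<and> (2 \<le> k \<and> U (k - 1) \<longrightarrow> k - 1 \<in> J) then 1 else 0)"
proof -
  have "(\<forall>l. fcover \<alpha> l k \<longrightarrow> l \<in> J) \<longleftrightarrow> (k < nn \<and> \<not> U k \<longrightarrow> k + 1 \<in> J) \<and> (2 \<le> k \<and> U (k - 1) \<longrightarrow> k - 1 \<in> J)"
    using k by (auto simp add: cover_down)
  moreover have "k \<in> felems \<alpha>" using k unfolding felems_def by simp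
  ultimately show ?thesis unfolding chi_def using rho_max_char[OF J] Mn_char[OF J] by simp
qed


definition H :: "nat set \<Rightarrow> nat \<Rightarrow> real" where
  "H J k = (if k = 0 then 1 else chi_hat k J)"

lemma U0: "U 0" using seg_0 by simp

lemma clos:
  assumes J: "J \<in> order_ideals \<alpha>" and k: "1 \<le> k"
  shows "k < nn \<Longrightarrow> U k \<Longrightarrow> k + 1 \<in> J \<Longrightarrow> k \<in> J"
    and "k < nn \<Longrightarrow> \<not> U k \<Longrightarrow> k \<in> J \<Longrightarrow> k + 1 \<in> J"
    and "2 \<le> k \<Longrightarrow> k \<le> nn \<Longrightarrow> U (k - 1) \<Longrightarrow> k \<in> J \<Longrightarrow> k - 1 \<in> J"
    and "2 \<le> k \<Longrightarrow> k \<le> nn \<Longrightarrow> \<not> U (k - 1) \<Longrightarrow> k - 1 \<in> J \<Longrightarrow> k \<in> J"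
    and "nn + 1 \<notin> J"
proof -
  show "k < nn \<Longrightarrow> U k \<Longrightarrow> k + 1 \<in> J \<Longrightarrow> k \<in> J"
    using ideal_cover[OF J, of k "k+1"] k by (simp add: cover_up)
  show "k < nn \<Longrightarrow> \<not> U k \<Longrightarrow> k \<in> J \<Longrightarrow> k + 1 \<in> J"
    using ideal_cover[OF J, of "k+1" k] k by (simp add: cover_down)
  show "2 \<le> k \<Longrightarrow> k \<le> nn \<Longrightarrow> U (k - 1) \<Longrightarrow> k \<in> J \<Longrightarrow> k - 1 \<in> J"
  proof -
    assume a: "2 \<le> k" "k \<le> nn" "U (k - 1)" "k \<in> J"
    have "k - 1 < nn" using a by simp
    then have "fcover \<alpha> (k-1) k" unfolding cover_down[OF k] using a by simp
    then show "k - 1 \<in> J" using ideal_cover[OF J] a by blast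
  qed
  show "2 \<le> k \<Longrightarrow> k \<le> nn \<Longrightarrow> \<not> U (k - 1) \<Longrightarrow> k - 1 \<in> J \<Longrightarrow> k \<in> J"
  proof -
    assume a: "2 \<le> k" "k \<le> nn" "\<not> U (k - 1)" "k - 1 \<in> J"
    have "k - 1 < nn" using a by simp
    then have "fcover \<alpha> k (k-1)" unfolding cover_up[OF k] using a by simp
    then show "k \<in> J" using ideal_cover[OF J] a by blast
  qed
  show "nn + 1 \<notin> J" using ideal_sub[OF J] unfolding felems_def by auto
qed

context
  fixes J k
  assumes J: "J \<in> order_ideals \<alpha>" and k: "1 \<le> k" "k \<le> nn" and Unn: "U nn"
begin

lemma F1: "\<not> k < nn \<Longrightarrow> U k \<and> k + 1 \<notin> J"
proof -
  assume "\<not> k < nn" then have "k = nn" using k by simp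
  then show ?thesis using Unn clos(5)[OF J k(1)] by simp
qed

lemma F2: "\<not> 2 \<le> k \<Longrightarrow> U 0 \<and> k = 1"
proof -
  assume "\<not> 2 \<le> k" then have "k = 1" using k by simp
  then show ?thesis using U0 by simp
qed

lemmas PP = chi_val[OF J k] mn_val[OF J k] H_def chi_hat_def
lemmas QQ = clos[OF J k(1)] k F1 F2

lemma P1: "U (k - 1) \<Longrightarrow> U k \<Longrightarrow> chi \<alpha> k J = H J k - H J (k + 1) \<and> chi \<alpha> k (rowmotion \<alpha> J) = H J (k - 1) - H J k"
  unfolding PP by (cases "k < nn"; cases "2 \<le> k"; cases "k \<in> J"; cases "k + 1 \<in> J"; cases "k - 1 \<in> J"; use QQ in simp)

lemma P2: "\<not> U (k - 1) \<Longrightarrow> \<not> U k \<Longrightarrow> chi \<alpha> k J = H J k - H J (k - 1) \<and> chi \<alpha> k (rowmotion \<alpha> J) = H J (k + 1) - H J k"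
  unfolding PP by (cases "k < nn"; cases "2 \<le> k"; cases "k \<in> J"; cases "k + 1 \<in> J"; cases "k - 1 \<in> J"; use QQ in simp)

lemma P3: "U (k - 1) \<Longrightarrow> \<not> U k \<Longrightarrow> chi \<alpha> k J = H J k"
  unfolding PP by (cases "k < nn"; cases "2 \<le> k"; cases "k \<in> J"; cases "k + 1 \<in> J"; cases "k - 1 \<in> J"; use QQ in simp)

lemma P4: "\<not> U (k - 1) \<Longrightarrow> U k \<Longrightarrow> chi \<alpha> k (rowmotion \<alpha> J) = 1 - H J k"
  unfolding PP by (cases "k < nn"; cases "2 \<le> k"; cases "k \<in> J"; cases "k + 1 \<in> J"; cases "k - 1 \<in> J"; use QQ in simp)

end

end


lemma interp:
  fixes D :: "nat \<Rightarrow> real"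
  assumes pq: "p < q" and Dp: "D p = 0" and Dq: "D q = 0"
    and rec: "\<And>k. p < k \<Longrightarrow> k < q \<Longrightarrow> D (k - 1) - 2 * D k + D (k + 1) = 0"
  shows "p \<le> k \<Longrightarrow> k \<le> q \<Longrightarrow> D k = 0"
proof -
  define c where "c = D (p + 1)"
  have main: "i + 1 \<le> q - p \<Longrightarrow> D (p + i) = real i * c \<and> D (p + i + 1) = real (i + 1) * c" for i
  proof (induction i)
    case 0 then show ?case using Dp c_def by simp
  next
    case (Suc i)
    then have IH: "D (p + i) = real i * c" "D (p + i + 1) = real (i + 1) * c" by simp_all
    have "D (p + i + 1 - 1) - 2 * D (p + i + 1) + D (p + i + 1 + 1) = 0"
      using rec[of "p + i + 1"] Suc.prems by simp
    then have "D (p + i + 2) = real (i + 2) * c" using IH by (simp add: algebra_simps)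
    then show ?case using IH by (simp add: algebra_simps)
  qed
  have "D q = real (q - p) * c" using main[of "q - p - 1"] pq by simp
  then have c0: "c = 0" using Dq pq by simp
  assume k: "p \<le> k" "k \<le> q"
  show "D k = 0"
  proof (cases "k = q")
    case True then show ?thesis using Dq by simp
  next
    case False
    then show ?thesis using main[of "k - p"] k c0 by simp
  qed
qed

locale fctx2 = fctx +
  assumes oddt: "odd tt" and pal: "rev \<alpha> = \<alpha>"
begin

lemma Unn: "U nn" using seg_nn oddt by simp

lemma psum_pal: "i \<le> tt \<Longrightarrow> psum \<alpha> (tt - i) = nn + 1 - psum \<alpha> i"
proof -
  assume i: "i \<le> tt"
  have "take (tt - i) \<alpha> = take (tt - i) (rev \<alpha>)" using pal by simp
  also have "\<dots> = rev (drop i \<alpha>)" using i by (simp add: take_rev)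
  finally have a: "psum \<alpha> (tt - i) = sum_list (drop i \<alpha>)" unfolding psum_def by simp
  have "sum_list \<alpha> = psum \<alpha> i + sum_list (drop i \<alpha>)" unfolding psum_def
    by (metis append_take_drop_id sum_list_append)
  moreover have "sum_list \<alpha> = nn + 1" using psum_tt unfolding psum_def by simp
  ultimately show ?thesis using a by simp
qed

lemma Usym: "j \<le> nn \<Longrightarrow> U (nn - j) = U j"
proof -
  assume j: "j \<le> nn"
  define i where "i = seg \<alpha> j"
  have sp: "1 \<le> i" "i \<le> tt" "psum \<alpha> (i - 1) \<le> j" "j < psum \<alpha> i"
    using seg_props[of j] j psum_tt unfolding i_def by auto
  have a: "psum \<alpha> (tt - i) = nn + 1 - psum \<alpha> i" using psum_pal sp by simp
  have b: "psum \<alpha> (tt - (i - 1)) = nn + 1 - psum \<alpha> (i - 1)" using psum_pal[of "i - 1"] sp by linarith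
  have pi: "psum \<alpha> i \<le> nn + 1" using psum_mono[of i tt] sp psum_tt by simp
  have "seg \<alpha> (nn - j) = tt + 1 - i"
  proof (rule seg_eq)
    show "1 \<le> tt + 1 - i" "tt + 1 - i \<le> tt" using sp by auto
    have "tt + 1 - i - 1 = tt - i" by simp
    then show "psum \<alpha> (tt + 1 - i - 1) \<le> nn - j" using a sp pi by simp
    have "tt + 1 - i = tt - (i - 1)" using sp by simp
    then show "nn - j < psum \<alpha> (tt + 1 - i)" using b sp j by simp
  qed
  then show ?thesis using oddt sp unfolding i_def[symmetric] by auto
qed

lemma Uin: "1 \<le> i \<Longrightarrow> i \<le> tt \<Longrightarrow> psum \<alpha> (i - 1) < k \<Longrightarrow> k < psum \<alpha> i \<Longrightarrow> U (k - 1) = U k"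
  using seg_eq[of i k] seg_eq[of i "k - 1"] by simp


context
  fixes I assumes I: "I \<in> order_ideals \<alpha>"
begin

abbreviation "Orb \<equiv> orbit \<alpha> I"
abbreviation "N \<equiv> real (card Orb)"
definition g :: "nat \<Rightarrow> real" where "g k = (\<Sum>J\<in>Orb. H J k)"

lemma Oid: "J \<in> Orb \<Longrightarrow> J \<in> order_ideals \<alpha>" using orbit_sub[OF I] by blast

lemma g0: "g 0 = N" unfolding g_def H_def by simp

lemma gtop: "g (nn + 1) = 0"
proof -
  have "H J (nn + 1) = 0" if "J \<in> Orb" for J
    using clos(5)[OF Oid[OF that], of 1] unfolding H_def chi_hat_def by simp
  then show ?thesis unfolding g_def by simp
qed

lemma gH: "1 \<le> k \<Longrightarrow> g k = (\<Sum>J\<in>Orb. chi_hat k J)"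
  unfolding g_def H_def by simp

lemma Schi: "1 \<le> k \<Longrightarrow> k \<le> nn \<Longrightarrow> (\<Sum>J\<in>Orb. chi \<alpha> k J) = (\<Sum>J\<in>Orb. chi \<alpha> k (rowmotion \<alpha> J))"
  using sum_rho[OF I, of "chi \<alpha> k"] by simp

context fixes k assumes k: "1 \<le> k" "k \<le> nn"
begin

lemma EUU: "U (k - 1) \<Longrightarrow> U k \<Longrightarrow> (\<Sum>J\<in>Orb. chi \<alpha> k J) = g k - g (k + 1) \<and> (\<Sum>J\<in>Orb. chi \<alpha> k J) = g (k - 1) - g k"
proof -
  assume u: "U (k - 1)" "U k"
  have a: "(\<Sum>J\<in>Orb. chi \<alpha> k J) = (\<Sum>J\<in>Orb. H J k - H J (k + 1))"
    by (rule sum.cong) (use P1[OF Oid k Unn u] in auto)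
  have b: "(\<Sum>J\<in>Orb. chi \<alpha> k (rowmotion \<alpha> J)) = (\<Sum>J\<in>Orb. H J (k - 1) - H J k)"
    by (rule sum.cong) (use P1[OF Oid k Unn u] in auto)
  show ?thesis using a b Schi[OF k] unfolding g_def sum_subtractf by simp
qed

lemma EDD: "\<not> U (k - 1) \<Longrightarrow> \<not> U k \<Longrightarrow> (\<Sum>J\<in>Orb. chi \<alpha> k J) = g k - g (k - 1) \<and> (\<Sum>J\<in>Orb. chi \<alpha> k J) = g (k + 1) - g k"
proof -
  assume u: "\<not> U (k - 1)" "\<not> U k"
  have a: "(\<Sum>J\<in>Orb. chi \<alpha> k J) = (\<Sum>J\<in>Orb. H J k - H J (k - 1))"
    by (rule sum.cong) (use P2[OF Oid k Unn u] in auto)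
  have b: "(\<Sum>J\<in>Orb. chi \<alpha> k (rowmotion \<alpha> J)) = (\<Sum>J\<in>Orb. H J (k + 1) - H J k)"
    by (rule sum.cong) (use P2[OF Oid k Unn u] in auto)
  show ?thesis using a b Schi[OF k] unfolding g_def sum_subtractf by simp
qed

lemma EUD: "U (k - 1) \<Longrightarrow> \<not> U k \<Longrightarrow> (\<Sum>J\<in>Orb. chi \<alpha> k J) = g k"
proof -
  assume u: "U (k - 1)" "\<not> U k"
  show ?thesis unfolding g_def
    by (rule sum.cong) (use P3[OF Oid k Unn u] in auto)
qed

lemma EDU: "\<not> U (k - 1) \<Longrightarrow> U k \<Longrightarrow> (\<Sum>J\<in>Orb. chi \<alpha> k J) = N - g k"
proof -
  assume u: "\<not> U (k - 1)" "U k"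
  have b: "(\<Sum>J\<in>Orb. chi \<alpha> k (rowmotion \<alpha> J)) = (\<Sum>J\<in>Orb. 1 - H J k)"
    by (rule sum.cong) (use P4[OF Oid k Unn u] in auto)
  show ?thesis using b Schi[OF k] unfolding g_def sum_subtractf by simp
qed

lemma E1: "U (k - 1) = U k \<Longrightarrow> g (k - 1) - 2 * g k + g (k + 1) = 0"
  using EUU EDD by (cases "U k") auto

end

definition D :: "nat \<Rightarrow> real" where "D k = g k + g (nn + 1 - k) - N"

context assumes hyp: "\<forall>i\<in>{1..tt-1}. g (psum \<alpha> i) + g (nn + 1 - psum \<alpha> i) = N"
begin

lemma psum_pos: "1 \<le> i \<Longrightarrow> psum \<alpha> i \<ge> 1"
  using psum_strict[of 0 i] tt2 psum_mono[of i tt] psum_mono[of 1 i] psum_Suc[of 0] pos[of 0] ne by simp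

lemma Dknot: "i \<le> tt \<Longrightarrow> D (psum \<alpha> i) = 0"
proof -
  assume i: "i \<le> tt"
  consider "i = 0" | "i = tt" | "1 \<le> i \<and> i \<le> tt - 1" using i by linarith
  then show ?thesis
  proof cases
    case 1 then show ?thesis unfolding D_def using g0 gtop by simp
  next
    case 2 then show ?thesis unfolding D_def using g0 gtop psum_tt by simp
  next
    case 3 then show ?thesis unfolding D_def using hyp by simp
  qed
qed

lemma Drec: "1 \<le> i \<Longrightarrow> i \<le> tt \<Longrightarrow> psum \<alpha> (i - 1) < k \<Longrightarrow> k < psum \<alpha> i \<Longrightarrow>
   D (k - 1) - 2 * D k + D (k + 1) = 0"
proof -
  assume a: "1 \<le> i" "i \<le> tt" "psum \<alpha> (i - 1) < k" "k < psum \<alpha> i"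
  have pi: "psum \<alpha> i \<le> nn + 1" using psum_mono[of i tt] a psum_tt by simp
  have k: "1 \<le> k" "k \<le> nn" using a pi by auto
  define m where "m = nn + 1 - k"
  have m: "1 \<le> m" "m \<le> nn" using k unfolding m_def by auto
  have uk: "U (k - 1) = U k" using Uin a by blast
  have um1: "U (m - 1) = U k" using Usym[of k] k unfolding m_def by simp
  have mm: "nn - (k - 1) = m" "nn + 1 - (k - 1) = m + 1" using k unfolding m_def by auto
  have um: "U m = U (k - 1)" using Usym[of "k - 1"] k unfolding mm by simp
  have e1: "g (k - 1) - 2 * g k + g (k + 1) = 0" using E1[OF k uk] .
  have e2: "g (m - 1) - 2 * g m + g (m + 1) = 0" using E1[OF m] um1 um uk by simp
  have "nn + 1 - (k - 1) = m + 1" "nn + 1 - (k + 1) = m - 1" "nn + 1 - k = m" using k unfolding m_def by auto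
  then show ?thesis unfolding D_def using e1 e2 by simp
qed

lemma Dzero: "k \<le> nn + 1 \<Longrightarrow> D k = 0"
proof (cases "k = nn + 1")
  case True then show ?thesis using Dknot[of tt] psum_tt by simp
next
  case False
  assume "k \<le> nn + 1"
  then have kk: "k < psum \<alpha> tt" using False psum_tt by simp
  define i where "i = seg \<alpha> k"
  have sp: "1 \<le> i" "i \<le> tt" "psum \<alpha> (i - 1) \<le> k" "k < psum \<alpha> i"
    using seg_props[OF kk] unfolding i_def by auto
  have lt: "psum \<alpha> (i - 1) < psum \<alpha> i" using psum_strict sp by simp
  show ?thesis
  proof (rule interp[OF lt])
    show "D (psum \<alpha> (i - 1)) = 0" using Dknot sp by simp
    show "D (psum \<alpha> i) = 0" using Dknot sp by simp
    show "\<And>k. psum \<alpha> (i - 1) < k \<Longrightarrow> k < psum \<alpha> i \<Longrightarrow> D (k - 1) - 2 * D k + D (k + 1) = 0"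
      using Drec sp by blast
  qed (use sp in auto)
qed

lemma Gsym: "k \<le> nn + 1 \<Longrightarrow> g (nn + 1 - k) = N - g k"
  using Dzero[of k] unfolding D_def by linarith

lemma concl1: "1 \<le> k \<Longrightarrow> k \<le> nn \<Longrightarrow> (\<Sum>J\<in>Orb. chi_hat k J + chi_hat (nn - k + 1) J) = N"
proof -
  assume k: "1 \<le> k" "k \<le> nn"
  have "(\<Sum>J\<in>Orb. chi_hat k J + chi_hat (nn - k + 1) J) = g k + g (nn + 1 - k)"
    unfolding sum.distrib using gH k by (simp add: Suc_diff_le)
  then show ?thesis using Gsym[of k] k by simp
qed

lemma concl2: "1 \<le> k \<Longrightarrow> k \<le> nn \<Longrightarrow> (\<Sum>J\<in>Orb. chi \<alpha> k J - chi \<alpha> (nn - k + 1) J) = 0"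
proof -
  assume k: "1 \<le> k" "k \<le> nn"
  define m where "m = nn + 1 - k"
  have m: "1 \<le> m" "m \<le> nn" "nn - k + 1 = m" using k unfolding m_def by auto
  have um1: "U (m - 1) = U k" using Usym[of k] k unfolding m_def by simp
  have mm: "nn - (k - 1) = m" "nn + 1 - (k - 1) = m + 1" using k unfolding m_def by auto
  have um: "U m = U (k - 1)" using Usym[of "k - 1"] k unfolding mm by simp
  have g1: "g m = N - g k" using Gsym[of k] k unfolding m_def by simp
  have g2: "g (m + 1) = N - g (k - 1)" using Gsym[of "k - 1"] k unfolding mm by simp
  have g3: "g (m - 1) = N - g (k + 1)" using Gsym[of "k + 1"] k unfolding m_def by simp
  have "(\<Sum>J\<in>Orb. chi \<alpha> k J) = (\<Sum>J\<in>Orb. chi \<alpha> m J)"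
  proof (cases "U (k - 1)"; cases "U k")
    assume "U (k - 1)" "U k"
    then show ?thesis using EUU[OF k] EUU[OF m(1,2)] um um1 g1 g2 by simp
  next
    assume "\<not> U (k - 1)" "\<not> U k"
    then show ?thesis using EDD[OF k] EDD[OF m(1,2)] um um1 g1 g3 by simp
  next
    assume "U (k - 1)" "\<not> U k"
    then show ?thesis using EUD[OF k] EDU[OF m(1,2)] um um1 g1 by simp
  next
    assume "\<not> U (k - 1)" "U k"
    then show ?thesis using EDU[OF k] EUD[OF m(1,2)] um um1 g1 by simp
  qed
  then show ?thesis unfolding sum_subtractf m(3) by simp
qed

end

end


lemma main:
  assumes hypM: "\<forall>i\<in>{1..tt-1}. mesic \<alpha> (\<lambda>I. chi_hat (shared \<alpha> i) I + chi_hat (shared \<alpha> (tt - i)) I) 1"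
  shows "(\<forall>k\<in>{1..nn}. mesic \<alpha> (\<lambda>I. chi_hat k I + chi_hat (nn - k + 1) I) 1)
       \<and> (\<forall>k\<in>{1..nn}. mesic \<alpha> (\<lambda>I. chi \<alpha> k I - chi \<alpha> (nn - k + 1) I) 0)"
proof -
  have hyp: "\<forall>i\<in>{1..tt-1}. g I (psum \<alpha> i) + g I (nn + 1 - psum \<alpha> i) = real (card (orbit \<alpha> I))"
    if I: "I \<in> order_ideals \<alpha>" for I
  proof
    fix i assume i: "i \<in> {1..tt-1}"
    have "psum \<alpha> i \<le> psum \<alpha> (tt - 1)" using i by (intro psum_mono) simp
    then have p2: "1 \<le> nn + 1 - psum \<alpha> i" using psum_last by simp
    have p1: "1 \<le> psum \<alpha> i" using psum_mono[of 1 i] psum_Suc[of 0] pos[of 0] ne tt2 i by simp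
    have ps: "shared \<alpha> (tt - i) = nn + 1 - psum \<alpha> i" "shared \<alpha> i = psum \<alpha> i"
      using psum_pal[of i] i unfolding shared_def by auto
    have "(\<Sum>J\<in>orbit \<alpha> I. chi_hat (shared \<alpha> i) J + chi_hat (shared \<alpha> (tt - i)) J) = 1 * real (card (orbit \<alpha> I))"
      using hypM i I unfolding mesic_iff by blast
    then show "g I (psum \<alpha> i) + g I (nn + 1 - psum \<alpha> i) = real (card (orbit \<alpha> I))"
      unfolding sum.distrib ps using gH[OF I p1] gH[OF I p2] by simp
  qed
  show ?thesis
    unfolding mesic_iff using concl1[OF _ hyp] concl2[OF _ hyp] by auto
qed

end

theorem theorem5p10:
  fixes \<alpha> :: "nat list"
  defines "t \<equiv> length \<alpha>" and "n \<equiv> fsize \<alpha>"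
  assumes "is_fence_comp \<alpha>"
    and "\<forall>i\<in>{1..t}. \<alpha> ! (i - 1) = \<alpha> ! (t + 1 - i - 1)"
    and "odd t"
    and "\<forall>i\<in>{1..t-1}. mesic \<alpha> (\<lambda>I. chi_hat (shared \<alpha> i) I + chi_hat (shared \<alpha> (t - i)) I) 1"
  shows "(\<forall>k\<in>{1..n}. mesic \<alpha> (\<lambda>I. chi_hat k I + chi_hat (n - k + 1) I) 1)
       \<and> (\<forall>k\<in>{1..n}. mesic \<alpha> (\<lambda>I. chi \<alpha> k I - chi \<alpha> (n - k + 1) I) 0)"
proof -
  have pal: "rev \<alpha> = \<alpha>"
  proof (rule nth_equalityI)
    show "length (rev \<alpha>) = length \<alpha>" by simp
    fix i assume i: "i < length (rev \<alpha>)"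
    then have "Suc i \<in> {1..t}" unfolding t_def by simp
    then have "\<alpha> ! (Suc i - 1) = \<alpha> ! (t + 1 - Suc i - 1)" using assms(4) by blast
    then show "rev \<alpha> ! i = \<alpha> ! i" using i unfolding t_def by (simp add: rev_nth)
  qed
  interpret fctx2 \<alpha>
    by (unfold_locales) (use assms(3,5) pal in \<open>simp_all add: t_def\<close>)
  show ?thesis using main assms(6) unfolding t_def n_def by blast
qed

end
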